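(* Let $P\subset\mathbb{Z}^2_{\ge0}$ be a B-polytope. Then, after possibly interchanging the two coordinates, one of the following holds: (1) ($B_1$-polytope) exactly one point of $P$ has nonzero second coordinate, this point is $(a,1)$ for some integer $a\ge0$, and $P$ contains at least two points with second coordinate $0$; (2) (border polytope) $P=\{(0,1),(1,1)\}\cup S\cup T$, where $S$ is a nonempty subset of $\{(c,0): c\in\mathbb{Z},\ c\ge1\}$ and $T\subseteq\{(0,0)\}$.
   Context: A $k$-simplex is a set of $k+1$ affinely independent points; a $k$-simplex $S\subset\mathbb{Z}^m_{\ge0}$ is a B-simplex if there is an index $i$ with exactly $k$ vertices in $\{x_i=0\}$ and the remaining vertex having $x_i=1$ (for $k=0$: the point has some coordinate equal to $1$). A B-polytope in $\mathbb{Z}^m_{\ge0}$ is a finite set $P\subset\mathbb{Z}^m_{\ge0}$ whose affine span has dimension $m$ such that every $(m-1)$-simplex with vertices in $P$ either is a B-simplex or has affine span containing the origin. (For $m=2$: every segment joining two distinct points of $P$ either is a B-simplex or lies on a line through the origin.) *)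

theory Defs
  imports Main
begin

type_synonym pt2 = "int \<times> int"

definition coord2 :: "nat \<Rightarrow> pt2 \<Rightarrow> int" where
  "coord2 i p = (if i = 1 then fst p else snd p)"

definition B_simplex2 :: "pt2 \<Rightarrow> pt2 \<Rightarrow> bool" where
  "B_simplex2 p q \<longleftrightarrow> p \<noteq> q \<and>
     (\<exists>i\<in>{1::nat,2}. (coord2 i p = 0 \<and> coord2 i q = 1) \<or> (coord2 i q = 0 \<and> coord2 i p = 1))"

text \<open>The line through distinct p, q contains the origin iff det(p,q) = 0.\<close>
definition line_through_origin2 :: "pt2 \<Rightarrow> pt2 \<Rightarrow> bool" where
  "line_through_origin2 p q \<longleftrightarrow> fst p * snd q - snd p * fst q = 0"

text \<open>The affine span of P has dimension 2: P contains three affinely independent points.\<close>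
definition affine_full2 :: "pt2 set \<Rightarrow> bool" where
  "affine_full2 P \<longleftrightarrow> (\<exists>a\<in>P. \<exists>b\<in>P. \<exists>c\<in>P.
      (fst b - fst a) * (snd c - snd a) - (snd b - snd a) * (fst c - fst a) \<noteq> 0)"

definition B_polytope2 :: "pt2 set \<Rightarrow> bool" where
  "B_polytope2 P \<longleftrightarrow> finite P \<and> (\<forall>p\<in>P. fst p \<ge> 0 \<and> snd p \<ge> 0) \<and> affine_full2 P \<and>
     (\<forall>p\<in>P. \<forall>q\<in>P. p \<noteq> q \<longrightarrow> B_simplex2 p q \<or> line_through_origin2 p q)"

end

theory Submission
  imports Defs
begin

lemma two_pts:
  assumes "P \<subseteq> {u, v}"
  shows "\<not> affine_full2 P"
proof
  assume "affine_full2 P"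
  then obtain a b c where abc: "a \<in> P" "b \<in> P" "c \<in> P"
    "(fst b - fst a) * (snd c - snd a) - (snd b - snd a) * (fst c - fst a) \<noteq> 0"
    unfolding affine_full2_def by blast
  have "a \<in> {u,v}" "b \<in> {u,v}" "c \<in> {u,v}" using abc assms by auto
  then show False using abc(4) by (auto simp: algebra_simps)
qed

lemma line_det:
  fixes p1 p2 :: int
  assumes "p1 \<noteq> 0" "p1 * b2 = p2 * b1" "p1 * c2 = p2 * c1" "p1 * a2 = p2 * a1"
  shows "(b1 - a1) * (c2 - a2) - (b2 - a2) * (c1 - a1) = 0"
proof -
  have "p1 * p1 * ((b1 - a1) * (c2 - a2) - (b2 - a2) * (c1 - a1))
    = (p1 * b1 - p1 * a1) * (p1 * c2 - p1 * a2) - (p1 * b2 - p1 * a2) * (p1 * c1 - p1 * a1)"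
    by (simp add: algebra_simps)
  also have "\<dots> = (p1 * b1 - p1 * a1) * (p2 * c1 - p2 * a1) - (p2 * b1 - p2 * a1) * (p1 * c1 - p1 * a1)"
    using assms by simp
  also have "\<dots> = 0" by (simp add: algebra_simps)
  finally show ?thesis using assms(1) by simp
qed

lemma no_big:
  assumes B: "B_polytope2 P" and p: "p \<in> P" "fst p \<ge> 2" "snd p \<ge> 2"
  shows False
proof -
  have col: "fst p * snd q = snd p * fst q" if "q \<in> P" for q
  proof (cases "q = p")
    case True then show ?thesis by simp
  next
    case False
    then have "p \<noteq> q" by auto
    then have "B_simplex2 p q \<or> line_through_origin2 p q" using B p that
      unfolding B_polytope2_def by blast
    then show ?thesis using p
      by (auto simp: B_simplex2_def line_through_origin2_def coord2_def)
  qed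
  from B obtain a b c where abc: "a \<in> P" "b \<in> P" "c \<in> P"
    "(fst b - fst a) * (snd c - snd a) - (snd b - snd a) * (fst c - fst a) \<noteq> 0"
    unfolding B_polytope2_def affine_full2_def by blast
  have "fst p \<noteq> 0" using p by simp
  from line_det[OF this col[OF abc(2)] col[OF abc(3)] col[OF abc(1)]] abc(4) show False by simp
qed

lemma Bs_swap: "B_simplex2 (prod.swap p) (prod.swap q) = B_simplex2 p q"
  by (auto simp: B_simplex2_def coord2_def prod_eq_iff)

lemma line_swap: "line_through_origin2 (prod.swap p) (prod.swap q) = line_through_origin2 p q"
  by (auto simp: line_through_origin2_def algebra_simps)

lemma B_swap:
  assumes B: "B_polytope2 P"
  shows "B_polytope2 (prod.swap ` P)"
proof -
  have fin: "finite P" and nn: "\<forall>p\<in>P. fst p \<ge> 0 \<and> snd p \<ge> 0" and full: "affine_full2 P"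
    and pw: "\<forall>p\<in>P. \<forall>q\<in>P. p \<noteq> q \<longrightarrow> B_simplex2 p q \<or> line_through_origin2 p q"
    using B unfolding B_polytope2_def by auto
  from full obtain a b c where abc: "a \<in> P" "b \<in> P" "c \<in> P"
      "(fst b - fst a) * (snd c - snd a) - (snd b - snd a) * (fst c - fst a) \<noteq> 0"
      unfolding affine_full2_def by blast
  have "(fst (prod.swap b) - fst (prod.swap a)) * (snd (prod.swap c) - snd (prod.swap a))
      - (snd (prod.swap b) - snd (prod.swap a)) * (fst (prod.swap c) - fst (prod.swap a)) \<noteq> 0"
    using abc(4) by (simp add: algebra_simps)
  then have f2: "affine_full2 (prod.swap ` P)" unfolding affine_full2_def using abc(1-3) by blast
  have pw2: "\<forall>p\<in>prod.swap ` P. \<forall>q\<in>prod.swap ` P. p \<noteq> q \<longrightarrow> B_simplex2 p q \<or> line_through_origin2 p q"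
    using pw by (auto simp: Bs_swap line_swap)
  show ?thesis unfolding B_polytope2_def using fin nn f2 pw2 by auto
qed

definition concl2 :: "pt2 set \<Rightarrow> bool" where
  "concl2 Q \<longleftrightarrow> (\<exists>a::int. a \<ge> 0 \<and> {p\<in>Q. snd p \<noteq> 0} = {(a, 1)} \<and> card {p\<in>Q. snd p = 0} \<ge> 2)
   \<or> (\<exists>S T. Q = {(0, 1), (1, 1)} \<union> S \<union> T \<and> S \<noteq> {} \<and>
        S \<subseteq> {(c, 0) | c::int. c \<ge> 1} \<and> T \<subseteq> {(0, 0)})"

lemma main_case:
  assumes B: "B_polytope2 P" and h: "\<forall>p\<in>P. snd p \<le> 1"
  shows "concl2 P \<or> concl2 (prod.swap ` P)"
proof -
  have fin: "finite P" and nn: "\<forall>p\<in>P. fst p \<ge> 0 \<and> snd p \<ge> 0" and full: "affine_full2 P"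
    and pw: "\<forall>p\<in>P. \<forall>q\<in>P. p \<noteq> q \<longrightarrow> B_simplex2 p q \<or> line_through_origin2 p q"
    using B unfolding B_polytope2_def by auto
  have s01: "snd p = 0 \<or> snd p = 1" if "p \<in> P" for p
    using h nn that by force
  define Y1 where "Y1 = {p\<in>P. snd p \<noteq> 0}"
  have Y1ne: "Y1 \<noteq> {}"
  proof
    assume "Y1 = {}"
    then have z: "\<forall>p\<in>P. snd p = 0" unfolding Y1_def by auto
    from full obtain a b c where abc: "a \<in> P" "b \<in> P" "c \<in> P"
      "(fst b - fst a) * (snd c - snd a) - (snd b - snd a) * (fst c - fst a) \<noteq> 0"
      unfolding affine_full2_def by blast
    then show False using z by simp
  qed
  have pair: "(fst p = 0 \<and> fst q = 1) \<or> (fst p = 1 \<and> fst q = 0)"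
    if "p \<in> Y1" "q \<in> Y1" "p \<noteq> q" for p q
  proof -
    have sp: "snd p = 1" "snd q = 1" using that s01[of p] s01[of q] unfolding Y1_def by auto
    have "B_simplex2 p q \<or> line_through_origin2 p q" using pw that unfolding Y1_def by auto
    moreover have "fst p \<noteq> fst q" using sp that(3) by (metis prod.expand)
    ultimately show ?thesis using sp
      by (auto simp: B_simplex2_def line_through_origin2_def coord2_def)
  qed
  have cases: "(\<exists>a. Y1 = {(a,1)}) \<or> Y1 = {(0,1),(1,1)}"
  proof -
    obtain p where p: "p \<in> Y1" using Y1ne by auto
    have sp: "snd p = 1" using p s01[of p] unfolding Y1_def by auto
    show ?thesis
    proof (cases "\<forall>q\<in>Y1. q = p")
      case True
      then have "Y1 = {p}" using p by blast
      moreover have "p = (fst p, 1)" using sp by (simp add: prod_eq_iff)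
      ultimately have "Y1 = {(fst p, 1)}" by metis
      then show ?thesis by blast
    next
      case False
      then obtain q where q: "q \<in> Y1" "q \<noteq> p" by auto
      have sq: "snd q = 1" using q s01[of q] unfolding Y1_def by auto
      have pq: "(fst p = 0 \<and> fst q = 1) \<or> (fst p = 1 \<and> fst q = 0)" using pair[OF p q(1)] q(2) by auto
      have pqv: "(p = (0,1) \<and> q = (1,1)) \<or> (p = (1,1) \<and> q = (0,1))"
        using pq sp sq by (auto simp: prod_eq_iff)
      have "Y1 \<subseteq> {(0,1),(1,1)}"
      proof
        fix r assume r: "r \<in> Y1"
        have sr: "snd r = 1" using r s01[of r] unfolding Y1_def by auto
        show "r \<in> {(0,1),(1,1)}"
        proof (cases "r = p \<or> r = q")
          case True then show ?thesis using pqv by auto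
        next
          case False
          then have "r \<noteq> p" "r \<noteq> q" by auto
          then have "(fst r = 0 \<and> fst q = 1) \<or> (fst r = 1 \<and> fst q = 0)"
                    "(fst r = 0 \<and> fst p = 1) \<or> (fst r = 1 \<and> fst p = 0)"
            using pair[OF r q(1)] pair[OF r p] by auto
          then have "fst r = 0 \<or> fst r = 1" "fst r \<noteq> fst p" "fst r \<noteq> fst q" by auto
          then have False using pq by auto
          then show ?thesis ..
        qed
      qed
      moreover have "{(0,1),(1,1)} \<subseteq> Y1" using pqv p q(1) by blast
      ultimately show ?thesis by blast
    qed
  qed
  show ?thesis
  proof (cases "\<exists>a. Y1 = {(a,1)}")
    case True
    then obtain a where a: "Y1 = {(a,1)}" by auto
    have a0: "a \<ge> 0" using a nn unfolding Y1_def by force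
    have "card {p\<in>P. snd p = 0} \<ge> 2"
    proof (rule ccontr)
      assume "\<not> ?thesis"
      then have "card {p\<in>P. snd p = 0} \<le> 1" by simp
      moreover have fin0: "finite {p\<in>P. snd p = 0}" using fin by auto
      ultimately have all: "\<forall>x\<in>{p\<in>P. snd p = 0}. \<forall>y\<in>{p\<in>P. snd p = 0}. x = y"
        using card_le_Suc0_iff_eq[OF fin0] by simp
      obtain z where "{p\<in>P. snd p = 0} \<subseteq> {z}"
      proof (cases "{p\<in>P. snd p = 0} = {}")
        case True then show ?thesis using that by blast
      next
        case False
        then obtain z where "z \<in> {p\<in>P. snd p = 0}" by blast
        then have "{p\<in>P. snd p = 0} \<subseteq> {z}" using all by blast
        then show ?thesis using that by blast
      qed
      then have "P \<subseteq> {(a,1), z}" using a unfolding Y1_def by auto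
      then show False using two_pts full by blast
    qed
    then have "concl2 P" using a a0 unfolding concl2_def Y1_def by blast
    then show ?thesis by simp
  next
    case False
    then have Y: "Y1 = {(0,1),(1,1)}" using cases by blast
    show ?thesis
    proof (cases "{p\<in>P. snd p = 0 \<and> fst p \<noteq> 0} = {}")
      case False
      define S where "S = {p\<in>P. snd p = 0 \<and> fst p \<noteq> 0}"
      define T where "T = P \<inter> {(0,0)}"
      have "P = {(0, 1), (1, 1)} \<union> S \<union> T"
      proof
        show "P \<subseteq> {(0, 1), (1, 1)} \<union> S \<union> T"
        proof
          fix p assume p: "p \<in> P"
          show "p \<in> {(0, 1), (1, 1)} \<union> S \<union> T"
          proof (cases "snd p = 0")
            case True then show ?thesis using p unfolding S_def T_def
              by (cases "fst p = 0") (auto simp: prod_eq_iff)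
          next
            case False then have "p \<in> Y1" using p unfolding Y1_def by auto
            then show ?thesis using Y by auto
          qed
        qed
        show "{(0, 1), (1, 1)} \<union> S \<union> T \<subseteq> P" using Y unfolding Y1_def S_def T_def by auto
      qed
      moreover have "S \<subseteq> {(c, 0) | c::int. c \<ge> 1}"
      proof
        fix p assume "p \<in> S"
        then have "p \<in> P" "snd p = 0" "fst p \<noteq> 0" unfolding S_def by auto
        moreover then have "fst p \<ge> 0" using nn by auto
        ultimately show "p \<in> {(c, 0) | c::int. c \<ge> 1}"
          by (intro CollectI exI[of _ "fst p"]) (auto simp: prod_eq_iff)
      qed
      moreover have "S \<noteq> {}" "T \<subseteq> {(0,0)}" using False unfolding S_def T_def by auto
      ultimately have "concl2 P" unfolding concl2_def by blast
      then show ?thesis by simp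
    next
      case True
      have sub: "P \<subseteq> {(0,0),(0,1),(1,1)}"
      proof
        fix p assume p: "p \<in> P"
        show "p \<in> {(0,0),(0,1),(1,1)}"
        proof (cases "snd p = 0")
          case True2: True
          then have "fst p = 0" using True p by (metis (mono_tags, lifting) empty_iff mem_Collect_eq)
          then show ?thesis using True2 by (auto simp: prod_eq_iff)
        next
          case False then have "p \<in> Y1" using p unfolding Y1_def by auto
          then show ?thesis using Y by auto
        qed
      qed
      have "(0,0) \<in> P"
      proof (rule ccontr)
        assume "(0,0) \<notin> P"
        then have "P \<subseteq> {(0,1),(1,1)}" using sub by auto
        then show False using two_pts full by blast
      qed
      moreover have "(0,1) \<in> P" "(1,1) \<in> P" using Y unfolding Y1_def by auto
      ultimately have PP: "P = {(0,0),(0,1),(1,1)}" using sub by auto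
      have e1: "{p \<in> prod.swap ` P. snd p \<noteq> 0} = {(1::int,1::int)}" unfolding PP by auto
      have e2: "{p \<in> prod.swap ` P. snd p = 0} = {(0::int,0::int),(1,0)}" unfolding PP by auto
      have "concl2 (prod.swap ` P)" unfolding concl2_def
        by (rule disjI1, rule exI[of _ 1], simp only: e1 e2, simp)
      then show ?thesis by simp
    qed
  qed
qed

theorem lemma3p4:
  fixes P :: "(int \<times> int) set"
  assumes "B_polytope2 P"
  shows "\<exists>\<sigma>\<in>{id, prod.swap}. let Q = \<sigma> ` P in
     (\<exists>a::int. a \<ge> 0 \<and> {p\<in>Q. snd p \<noteq> 0} = {(a, 1)} \<and> card {p\<in>Q. snd p = 0} \<ge> 2)
   \<or> (\<exists>S T. Q = {(0, 1), (1, 1)} \<union> S \<union> T \<and> S \<noteq> {} \<and>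
        S \<subseteq> {(c, 0) | c::int. c \<ge> 1} \<and> T \<subseteq> {(0, 0)})"
proof -
  have goal: "\<exists>\<sigma>\<in>{id, prod.swap}. concl2 (\<sigma> ` P)"
  proof -
    have nn: "\<forall>p\<in>P. fst p \<ge> 0 \<and> snd p \<ge> 0" using assms unfolding B_polytope2_def by auto
    have pw: "\<forall>p\<in>P. \<forall>q\<in>P. p \<noteq> q \<longrightarrow> B_simplex2 p q \<or> line_through_origin2 p q"
      using assms unfolding B_polytope2_def by auto
    have dich: "(\<forall>p\<in>P. snd p \<le> 1) \<or> (\<forall>p\<in>P. fst p \<le> 1)"
    proof (rule ccontr)
      assume "\<not> ?thesis"
      then obtain p q where p: "p \<in> P" "snd p \<ge> 2" and q: "q \<in> P" "fst q \<ge> 2" by force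
      have p1: "fst p \<le> 1" using no_big[OF assms p(1)] p by force
      have q2: "snd q \<le> 1" using no_big[OF assms q(1)] q by force
      have "p \<noteq> q" using p1 q by auto
      then have "B_simplex2 p q \<or> line_through_origin2 p q" using pw p q by auto
      moreover have "fst p * snd q \<le> 1" using p1 q2 nn p q
        by (intro mult_le_one) auto
      moreover have "snd p * fst q \<ge> 2 * 2" using p q by (intro mult_mono) auto
      ultimately show False using p q p1 q2
        by (auto simp: B_simplex2_def line_through_origin2_def coord2_def)
    qed
    show ?thesis
    proof (cases "\<forall>p\<in>P. snd p \<le> 1")
      case True
      from main_case[OF assms True] show ?thesis by auto
    next
      case False
      then have F: "\<forall>p\<in>P. fst p \<le> 1" using dich by auto
      have B': "B_polytope2 (prod.swap ` P)"
        using B_swap assms by blast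
      have "\<forall>p\<in>prod.swap ` P. snd p \<le> 1" using F by auto
      from main_case[OF B' this] have "concl2 (prod.swap ` P) \<or> concl2 (prod.swap ` prod.swap ` P)" .
      moreover have "prod.swap ` prod.swap ` P = P" by (simp add: image_comp)
      ultimately show ?thesis by auto
    qed
  qed
  then show ?thesis unfolding concl2_def Let_def by simp
qed

end
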